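(* Let $A$ be any implementable allocation rule. Let $\pi_i : \mathcal V_i \to [0,\infty)$, $i = 1,\dots,n$, be measurable functions, and let $P^*$ be the payment rule in which a bidder $i$ with the largest value of $\pi_i(v_i)$ (ties broken by an arbitrary fixed rule) pays $\pi_i(v_i)$ and all other bidders pay $0$. If $P^*$ satisfies revenue equivalence, i.e. $\mathbb E[P_i^*(\bm v) \mid v_i] = z_i(v_i)$ for all $i, v_i$, then for every convex $g : \mathbb R \to \mathbb R$ and every (non-negative) payment rule $P$ implementing $A$, $\mathbb E[g(\sum_i P_i^*(\bm v))] \le \mathbb E[g(\sum_i P_i(\bm v))]$ (whenever these expectations exist).
   Context: Setting: $n$ risk-neutral unit-demand bidders and $k$ identical items, $1 \le k < n$. Bidder $i$ has private value $v_i \in \mathcal V_i = [0,\bar v_i]$, drawn independently across bidders from a distribution $F_i$ with density $f_i > 0$ on $\mathcal V_i$ (distributions may differ across bidders); $\bm v = (v_1,\dots,v_n)$, $\mathcal V = \prod_i \mathcal V_i$. An allocation rule is a measurable map $A : \mathcal V \to \{0,1\}^n$ with $\sum_i A_i(\bm v) \le k$. Its interim allocation is $x_i(v_i) = \mathbb E[A_i(\bm v) \mid v_i]$, and $A$ is called implementable if every $x_i$ is non-decreasing. Its interim payment function is $z_i(v_i) = v_i x_i(v_i) - \int_0^{v_i} x_i(u)\,du$. A payment rule is a measurable map $P : \mathcal V \to [0,\infty)^n$ (payments are non-negative). $P$ implements $A$ if $(A,P)$ is Bayesian incentive compatible, i.e. $\mathbb E[v_i A_i(\bm v) - P_i(\bm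 v) \mid v_i] \ge \mathbb E[v_i A_i(v_i',\bm v_{-i}) - P_i(v_i',\bm v_{-i}) \mid v_i]$ for all $i, v_i, v_i'$, and satisfies revenue equivalence $\mathbb E[P_i(\bm v) \mid v_i] = z_i(v_i)$ for all $i, v_i$. *)

theory Defs
  imports "HOL-Probability.Probability"
begin

definition bidder_dist :: "(nat \<Rightarrow> real \<Rightarrow> real) \<Rightarrow> (nat \<Rightarrow> real) \<Rightarrow> nat \<Rightarrow> real measure" where
  "bidder_dist f vb i = density (restrict_space lborel {0..vb i}) (\<lambda>x. ennreal (f i x))"

definition profile_dist :: "nat \<Rightarrow> (nat \<Rightarrow> real \<Rightarrow> real) \<Rightarrow> (nat \<Rightarrow> real) \<Rightarrow> (nat \<Rightarrow> real) measure" where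
  "profile_dist n f vb = PiM {..<n} (bidder_dist f vb)"

text \<open>Interim expectation E[X(v) | v_i = u] (values independent across bidders).\<close>
definition interim :: "(nat \<Rightarrow> real) measure \<Rightarrow> ((nat \<Rightarrow> real) \<Rightarrow> real) \<Rightarrow> nat \<Rightarrow> real \<Rightarrow> real" where
  "interim \<Omega> X i u = (\<integral>v. X (v(i := u)) \<partial>\<Omega>)"

definition allocation_rule :: "nat \<Rightarrow> nat \<Rightarrow> (nat \<Rightarrow> real) measure \<Rightarrow> ((nat \<Rightarrow> real) \<Rightarrow> nat \<Rightarrow> real) \<Rightarrow> bool" where
  "allocation_rule n k \<Omega> A \<longleftrightarrow>
     (\<forall>i<n. (\<lambda>v. A v i) \<in> borel_measurable \<Omega>) \<and>
     (\<forall>v\<in>space \<Omega>. (\<forall>i<n. A v i \<in> {0, 1}) \<and> (\<Sum>i<n. A v i) \<le> real k)"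

definition interim_alloc :: "(nat \<Rightarrow> real) measure \<Rightarrow> ((nat \<Rightarrow> real) \<Rightarrow> nat \<Rightarrow> real) \<Rightarrow> nat \<Rightarrow> real \<Rightarrow> real" where
  "interim_alloc \<Omega> A i = interim \<Omega> (\<lambda>v. A v i) i"

definition implementable :: "nat \<Rightarrow> (nat \<Rightarrow> real) \<Rightarrow> (nat \<Rightarrow> real) measure \<Rightarrow> ((nat \<Rightarrow> real) \<Rightarrow> nat \<Rightarrow> real) \<Rightarrow> bool" where
  "implementable n vb \<Omega> A \<longleftrightarrow> (\<forall>i<n. mono_on {0..vb i} (interim_alloc \<Omega> A i))"

definition interim_pay :: "(nat \<Rightarrow> real) measure \<Rightarrow> ((nat \<Rightarrow> real) \<Rightarrow> nat \<Rightarrow> real) \<Rightarrow> nat \<Rightarrow> real \<Rightarrow> real" where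
  "interim_pay \<Omega> A i u = u * interim_alloc \<Omega> A i u - (LINT t:{0..u}|lborel. interim_alloc \<Omega> A i t)"

definition payment_rule :: "nat \<Rightarrow> (nat \<Rightarrow> real) measure \<Rightarrow> ((nat \<Rightarrow> real) \<Rightarrow> nat \<Rightarrow> real) \<Rightarrow> bool" where
  "payment_rule n \<Omega> P \<longleftrightarrow>
     (\<forall>i<n. (\<lambda>v. P v i) \<in> borel_measurable \<Omega>) \<and> (\<forall>v\<in>space \<Omega>. \<forall>i<n. 0 \<le> P v i)"

definition revenue_equiv :: "nat \<Rightarrow> (nat \<Rightarrow> real) \<Rightarrow> (nat \<Rightarrow> real) measure \<Rightarrow> ((nat \<Rightarrow> real) \<Rightarrow> nat \<Rightarrow> real) \<Rightarrow> ((nat \<Rightarrow> real) \<Rightarrow> nat \<Rightarrow> real) \<Rightarrow> bool" where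
  "revenue_equiv n vb \<Omega> A P \<longleftrightarrow>
     (\<forall>i<n. \<forall>u\<in>{0..vb i}. integrable \<Omega> (\<lambda>v. P (v(i := u)) i) \<and>
        interim \<Omega> (\<lambda>v. P v i) i u = interim_pay \<Omega> A i u)"

definition BIC :: "nat \<Rightarrow> (nat \<Rightarrow> real) \<Rightarrow> (nat \<Rightarrow> real) measure \<Rightarrow> ((nat \<Rightarrow> real) \<Rightarrow> nat \<Rightarrow> real) \<Rightarrow> ((nat \<Rightarrow> real) \<Rightarrow> nat \<Rightarrow> real) \<Rightarrow> bool" where
  "BIC n vb \<Omega> A P \<longleftrightarrow>
     (\<forall>i<n. \<forall>u\<in>{0..vb i}. \<forall>u'\<in>{0..vb i}.
        (\<integral>v. u * A (v(i := u')) i - P (v(i := u')) i \<partial>\<Omega>)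
          \<le> (\<integral>v. u * A (v(i := u)) i - P (v(i := u)) i \<partial>\<Omega>))"

definition implements :: "nat \<Rightarrow> (nat \<Rightarrow> real) \<Rightarrow> (nat \<Rightarrow> real) measure \<Rightarrow> ((nat \<Rightarrow> real) \<Rightarrow> nat \<Rightarrow> real) \<Rightarrow> ((nat \<Rightarrow> real) \<Rightarrow> nat \<Rightarrow> real) \<Rightarrow> bool" where
  "implements n vb \<Omega> P A \<longleftrightarrow> payment_rule n \<Omega> P \<and> BIC n vb \<Omega> A P \<and> revenue_equiv n vb \<Omega> A P"

text \<open>P* : some bidder w with maximal pi_w(v_w) (chosen by a fixed measurable tie-breaking
  rule, encoded in Pstar itself) pays pi_w(v_w), everybody else pays 0.\<close>
definition highest_pi_payment :: "nat \<Rightarrow> (nat \<Rightarrow> real) measure \<Rightarrow> (nat \<Rightarrow> real \<Rightarrow> real) \<Rightarrow> ((nat \<Rightarrow> real) \<Rightarrow> nat \<Rightarrow> real) \<Rightarrow> bool" where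
  "highest_pi_payment n \<Omega> \<pi> Pstar \<longleftrightarrow>
     payment_rule n \<Omega> Pstar \<and>
     (\<forall>v\<in>space \<Omega>. \<exists>w<n. (\<forall>j<n. \<pi> j (v j) \<le> \<pi> w (v w)) \<and> Pstar v w = \<pi> w (v w) \<and>
                        (\<forall>j<n. j \<noteq> w \<longrightarrow> Pstar v j = 0))"

end

theory Submission
  imports Defs
begin


definition rd :: "(real \<Rightarrow> real) \<Rightarrow> real \<Rightarrow> real" where
  "rd g x = Inf ((\<lambda>t. (g x - g t) / (x - t)) ` ({x<..} \<inter> UNIV))"

lemma rd_sub: assumes "convex_on UNIV g" shows "g y \<ge> g x + rd g x * (y - x)"
  unfolding rd_def by (rule convex_le_Inf_differential[OF assms]) auto

lemma rd_le_slope: assumes g: "convex_on UNIV g" and "x < t"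
  shows "rd g x \<le> (g x - g t) / (x - t)"
  unfolding rd_def
proof (rule cInf_lower)
  show "(g x - g t) / (x - t) \<in> (\<lambda>t. (g x - g t) / (x - t)) ` ({x<..} \<inter> UNIV)" using assms by auto
  show "bdd_below ((\<lambda>t. (g x - g t) / (x - t)) ` ({x<..} \<inter> UNIV))"
  proof (rule bdd_belowI2)
    fix t assume "t \<in> {x<..} \<inter> UNIV"
    then show "(g (x-1) - g x) / ((x-1) - x) \<le> (g x - g t) / (x - t)"
      using convex_on_slope_le(2)[OF g, of "x-1" t x] convex_on_slope_le(1)[OF g, of "x-1" t x] by auto
  qed
qed

lemma rd_mono: assumes g: "convex_on UNIV g" and "x \<le> y" shows "rd g x \<le> rd g y"
proof (cases "x = y")
  case False
  then have xy: "x < y" using assms by auto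
  have "rd g x \<le> (g x - g y) / (x - y)" by (rule rd_le_slope[OF g xy])
  also have "\<dots> \<le> rd g y" unfolding rd_def
  proof (rule cInf_greatest)
    show "(\<lambda>t. (g y - g t) / (y - t)) ` ({y<..} \<inter> UNIV) \<noteq> {}" by auto
    fix z assume "z \<in> (\<lambda>t. (g y - g t) / (y - t)) ` ({y<..} \<inter> UNIV)"
    then obtain t where t: "y < t" "z = (g y - g t) / (y - t)" by auto
    have "(g x - g y) / (x - y) \<le> (g x - g t) / (x - t)"
      using convex_on_slope_le(1)[OF g, of x t y] xy t by auto
    also have "\<dots> \<le> (g y - g t) / (y - t)"
      using convex_on_slope_le(2)[OF g, of x t y] xy t by auto
    finally show "(g x - g y) / (x - y) \<le> z" using t by simp
  qed
  finally show ?thesis .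
qed simp

definition gc :: "(real \<Rightarrow> real) \<Rightarrow> real \<Rightarrow> real \<Rightarrow> real" where
  "gc g c x = (if x \<le> c then g x else g c + rd g c * (x - c))"

lemma gc_sub: assumes g: "convex_on UNIV g"
  shows "gc g c y \<ge> gc g c x + rd g (min x c) * (y - x)"
proof -
  have s1: "\<And>a b. g b \<ge> g a + rd g a * (b - a)" by (rule rd_sub[OF g])
  show ?thesis
  proof (cases "x \<le> c")
    case True
    show ?thesis
    proof (cases "y \<le> c")
      case True
      then show ?thesis using \<open>x \<le> c\<close> s1[of x y] by (simp add: gc_def)
    next
      case False
      have m: "rd g x \<le> rd g c" using rd_mono[OF g True] .
      have "g c \<ge> g x + rd g x * (c - x)" by (rule s1)
      moreover have "rd g x * (y - c) \<le> rd g c * (y - c)" using m False by (intro mult_right_mono) auto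
      ultimately show ?thesis using True False by (simp add: gc_def algebra_simps)
    qed
  next
    case False
    show ?thesis
    proof (cases "y \<le> c")
      case True
      then show ?thesis using False s1[of c y] by (simp add: gc_def algebra_simps)
    next
      case False
      then show ?thesis using \<open>\<not> x \<le> c\<close> by (simp add: gc_def algebra_simps)
    qed
  qed
qed

lemma gc_le: assumes g: "convex_on UNIV g" shows "gc g c x \<le> g x"
  using rd_sub[OF g, of c x] by (simp add: gc_def)

lemma gc_lower: assumes g: "convex_on UNIV g" and "0 \<le> c"
  shows "g 0 + rd g 0 * x \<le> gc g c x"
  using gc_sub[OF g, of c 0 x] assms by (simp add: gc_def)

lemma gc_upper: assumes g: "convex_on UNIV g" and "0 \<le> c" "0 \<le> x"
  shows "gc g c x \<le> g 0 + rd g c * x"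
proof -
  have "gc g c 0 \<ge> gc g c x + rd g (min x c) * (0 - x)" by (rule gc_sub[OF g])
  moreover have "rd g (min x c) * x \<le> rd g c * x"
    using rd_mono[OF g, of "min x c" c] assms by (intro mult_right_mono) auto
  ultimately show ?thesis using assms by (simp add: gc_def)
qed



lemma PiM_coord_nn:
  fixes X :: "('i \<Rightarrow> 'a) \<Rightarrow> ennreal"
  assumes I: "finite I" "i \<in> I" and P: "\<And>j. j \<in> I \<Longrightarrow> prob_space (M j)"
    and X: "X \<in> borel_measurable (PiM I M)"
  shows "(\<integral>\<^sup>+v. X v \<partial>PiM I M) = (\<integral>\<^sup>+u. (\<integral>\<^sup>+v. X (v(i:=u)) \<partial>PiM I M) \<partial>M i)"
proof -
  define M' where "M' j = (if j \<in> I then M j else M i)" for j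
  have PM: "PiM I M = PiM I M'" by (rule PiM_cong) (auto simp: M'_def)
  have M'i: "M' i = M i" using I by (simp add: M'_def)
  have pj: "prob_space (M' j)" for j using P I by (auto simp: M'_def)
  interpret product_sigma_finite M'
    unfolding product_sigma_finite_def
    using pj by (simp add: prob_space_imp_sigma_finite)
  define J where "J = I - {i}"
  have IJ: "I = insert i J" "finite J" "i \<notin> J" using I by (auto simp: J_def)
  have X': "X \<in> borel_measurable (PiM (insert i J) M')" using X PM IJ by simp
  have "(\<integral>\<^sup>+v. X v \<partial>PiM I M) = (\<integral>\<^sup>+ y. (\<integral>\<^sup>+ x. X (x(i := y)) \<partial>(Pi\<^sub>M J M')) \<partial>(M' i))"
    using product_nn_integral_insert_rev[OF IJ(2,3) X'] PM IJ(1) by simp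
  also have "\<dots> = (\<integral>\<^sup>+u. (\<integral>\<^sup>+v. X (v(i:=u)) \<partial>PiM I M) \<partial>M' i)"
  proof (rule nn_integral_cong)
    fix u assume u: "u \<in> space (M' i)"
    have mu: "(\<lambda>v. v(i:=u)) \<in> PiM (insert i J) M' \<rightarrow>\<^sub>M PiM (insert i J) M'"
      using u by (intro measurable_fun_upd[where J="insert i J"]) auto
    have Xu: "(\<lambda>v. X (v(i:=u))) \<in> borel_measurable (PiM (insert i J) M')"
      using measurable_comp[OF mu X'] by (simp add: comp_def)
    have "(\<integral>\<^sup>+v. X (v(i:=u)) \<partial>PiM I M) = (\<integral>\<^sup>+v. X (v(i:=u)) \<partial>PiM (insert i J) M')"
      using PM IJ by simp
    also have "\<dots> = (\<integral>\<^sup>+ y. (\<integral>\<^sup>+ x. X (x(i := y, i := u)) \<partial>(Pi\<^sub>M J M')) \<partial>(M' i))"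
      by (rule product_nn_integral_insert_rev[OF IJ(2,3) Xu])
    also have "\<dots> = (\<integral>\<^sup>+ y. (\<integral>\<^sup>+ x. X (x(i := u)) \<partial>(Pi\<^sub>M J M')) \<partial>(M' i))"
      by simp
    also have "\<dots> = (\<integral>\<^sup>+ x. X (x(i := u)) \<partial>(Pi\<^sub>M J M'))"
      using pj[of i] by (simp add: prob_space.emeasure_space_1)
    finally show "(\<integral>\<^sup>+ x. X (x(i := u)) \<partial>(Pi\<^sub>M J M')) = (\<integral>\<^sup>+v. X (v(i:=u)) \<partial>PiM I M)" by simp
  qed
  finally show ?thesis unfolding M'i .
qed



locale auc =
  fixes n :: nat and f :: "nat \<Rightarrow> real \<Rightarrow> real" and vb :: "nat \<Rightarrow> real"
  assumes vbpos: "\<forall>i<n. 0 < vb i"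
    and fmeas: "\<forall>i<n. f i \<in> borel_measurable lborel"
    and fint: "\<forall>i<n. (\<integral>\<^sup>+x\<in>{0..vb i}. ennreal (f i x) \<partial>lborel) = 1"
begin

abbreviation "\<mu> \<equiv> bidder_dist f vb"
abbreviation "\<Omega> \<equiv> profile_dist n f vb"

lemma space_mu[simp]: "space (\<mu> i) = {0..vb i}"
  by (simp add: bidder_dist_def)

lemma prob_mu: assumes "i < n" shows "prob_space (\<mu> i)"
proof (rule prob_spaceI)
  have fm: "f i \<in> borel_measurable (restrict_space lborel {0..vb i})"
    using fmeas assms by (intro measurable_restrict_space1) auto
  have "emeasure (\<mu> i) (space (\<mu> i)) = (\<integral>\<^sup>+x. ennreal (f i x) * indicator {0..vb i} x \<partial>restrict_space lborel {0..vb i})"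
    unfolding bidder_dist_def
    by (subst emeasure_density) (use fm in \<open>auto simp: space_restrict_space sets_restrict_space_iff\<close>)
  also have "\<dots> = (\<integral>\<^sup>+x\<in>{0..vb i}. ennreal (f i x) \<partial>lborel)"
    by (subst nn_integral_restrict_space) (auto intro!: nn_integral_cong simp: indicator_def)
  also have "\<dots> = 1" using fint assms by auto
  finally show "emeasure (\<mu> i) (space (\<mu> i)) = 1" .
qed

lemma prob_Omega: "prob_space \<Omega>"
  unfolding profile_dist_def by (rule prob_space_PiM) (use prob_mu in auto)

lemma space_Omega: "space \<Omega> = PiE {..<n} (\<lambda>i. {0..vb i})"
  by (simp add: profile_dist_def space_PiM)

lemma upd_space: assumes "v \<in> space \<Omega>" "i < n" "u \<in> {0..vb i}" shows "v(i:=u) \<in> space \<Omega>"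
proof -
  have v: "v \<in> PiE {..<n} (\<lambda>i. {0..vb i})" using assms(1) space_Omega by simp
  have "v(i:=u) \<in> PiE {..<n} (\<lambda>i. {0..vb i})"
  proof (rule PiE_I)
    fix x assume "x \<in> {..<n}" then show "(v(i:=u)) x \<in> {0..vb x}"
      using PiE_mem[OF v, of x] assms by (cases "x = i") auto
  next
    fix x assume "x \<notin> {..<n}" then show "(v(i:=u)) x = undefined"
      using PiE_arb[OF v, of x] assms by auto
  qed
  then show ?thesis using space_Omega by simp
qed

lemma comp_space: "v \<in> space \<Omega> \<Longrightarrow> i < n \<Longrightarrow> v i \<in> {0..vb i}"
  using PiE_mem[of v "{..<n}" "\<lambda>i. {0..vb i}" i] space_Omega by simp

lemma coord_nn:
  fixes X :: "(nat \<Rightarrow> real) \<Rightarrow> ennreal"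
  assumes "i < n" "X \<in> borel_measurable \<Omega>"
  shows "(\<integral>\<^sup>+v. X v \<partial>\<Omega>) = (\<integral>\<^sup>+u. (\<integral>\<^sup>+v. X (v(i:=u)) \<partial>\<Omega>) \<partial>\<mu> i)"
  using PiM_coord_nn[of "{..<n}" i \<mu> X] assms prob_mu unfolding profile_dist_def by auto

lemma comp_meas: "i < n \<Longrightarrow> (\<lambda>v. v i) \<in> \<Omega> \<rightarrow>\<^sub>M \<mu> i"
  unfolding profile_dist_def by (rule measurable_component_singleton) auto

lemma upd_meas: assumes "i < n" "u \<in> {0..vb i}" shows "(\<lambda>v. v(i:=u)) \<in> \<Omega> \<rightarrow>\<^sub>M \<Omega>"
  unfolding profile_dist_def
  using assms by (intro measurable_fun_upd[where J="{..<n}"]) auto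


lemma upd_comp_meas:
  assumes "F \<in> borel_measurable \<Omega>" "i < n" "u \<in> {0..vb i}"
  shows "(\<lambda>v. F (v(i:=u))) \<in> borel_measurable \<Omega>"
  using measurable_comp[OF upd_meas[OF assms(2,3)] assms(1)] by (simp add: comp_def)

lemma ialloc_bounds:
  assumes A: "allocation_rule n k \<Omega> A" and i: "i < n" and t: "t \<in> {0..vb i}"
  shows "0 \<le> interim_alloc \<Omega> A i t \<and> interim_alloc \<Omega> A i t \<le> 1"
proof -
  interpret P: prob_space \<Omega> by (rule prob_Omega)
  have Am: "(\<lambda>v. A v i) \<in> borel_measurable \<Omega>" using A i by (auto simp: allocation_rule_def)
  have Fm: "(\<lambda>v. A (v(i:=t)) i) \<in> borel_measurable \<Omega>" by (rule upd_comp_meas[OF Am i t])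
  have F01: "\<forall>v\<in>space \<Omega>. A (v(i:=t)) i \<in> {0,1}"
    using A i t upd_space by (auto simp: allocation_rule_def)
  have int: "integrable \<Omega> (\<lambda>v. A (v(i:=t)) i)"
    by (rule P.integrable_const_bound[where B=1]) (use F01 Fm in \<open>auto intro!: AE_I2\<close>)
  have "0 \<le> (\<integral>v. A (v(i:=t)) i \<partial>\<Omega>)" by (rule integral_nonneg_AE) (use F01 in \<open>auto intro!: AE_I2\<close>)
  moreover have "(\<integral>v. A (v(i:=t)) i \<partial>\<Omega>) \<le> 1" by (rule P.integral_le_const[OF int]) (use F01 in \<open>auto intro!: AE_I2\<close>)
  ultimately show ?thesis by (simp add: interim_alloc_def interim_def)
qed

lemma ip_le:
  assumes A: "allocation_rule n k \<Omega> A" and i: "i < n" and u: "u \<in> {0..vb i}"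
  shows "interim_pay \<Omega> A i u \<le> vb i"
proof -
  have L: "0 \<le> (LINT t:{0..u}|lborel. interim_alloc \<Omega> A i t)"
    unfolding set_lebesgue_integral_def
    by (rule integral_nonneg_AE) (use ialloc_bounds[OF A i] u in \<open>auto simp: indicator_def\<close>)
  have "u * interim_alloc \<Omega> A i u \<le> u * 1"
    using ialloc_bounds[OF A i u] u by (intro mult_left_mono) auto
  then show ?thesis using L u by (simp add: interim_pay_def)
qed

lemma wt:
  assumes Q: "payment_rule n \<Omega> Q" "revenue_equiv n vb \<Omega> A Q" and j: "j < n"
    and w: "w \<in> borel_measurable (\<mu> j)" "\<forall>u\<in>{0..vb j}. 0 \<le> w u"
  shows "(\<integral>\<^sup>+v. ennreal (w (v j) * Q v j) \<partial>\<Omega>) = (\<integral>\<^sup>+u. ennreal (w u) * ennreal (interim_pay \<Omega> A j u) \<partial>\<mu> j)"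
proof -
  have Qm: "(\<lambda>v. Q v j) \<in> borel_measurable \<Omega>" using Q j by (auto simp: payment_rule_def)
  have wm: "(\<lambda>v. w (v j)) \<in> borel_measurable \<Omega>"
    using measurable_comp[OF comp_meas[OF j] w(1)] by (simp add: comp_def)
  have Xm: "(\<lambda>v. ennreal (w (v j) * Q v j)) \<in> borel_measurable \<Omega>" using Qm wm by measurable
  have "(\<integral>\<^sup>+v. ennreal (w (v j) * Q v j) \<partial>\<Omega>) = (\<integral>\<^sup>+u. (\<integral>\<^sup>+v. ennreal (w ((v(j:=u)) j) * Q (v(j:=u)) j) \<partial>\<Omega>) \<partial>\<mu> j)"
    by (rule coord_nn[OF j Xm])
  also have "\<dots> = (\<integral>\<^sup>+u. ennreal (w u) * ennreal (interim_pay \<Omega> A j u) \<partial>\<mu> j)"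
  proof (rule nn_integral_cong)
    fix u assume "u \<in> space (\<mu> j)"
    then have u: "u \<in> {0..vb j}" by simp
    have nn: "\<forall>v\<in>space \<Omega>. 0 \<le> Q (v(j:=u)) j"
      using Q(1) j u upd_space by (auto simp: payment_rule_def)
    have intg: "integrable \<Omega> (\<lambda>v. Q (v(j:=u)) j)" and ie: "interim \<Omega> (\<lambda>v. Q v j) j u = interim_pay \<Omega> A j u"
      using Q(2) j u by (auto simp: revenue_equiv_def)
    have "(\<integral>\<^sup>+v. ennreal (w ((v(j:=u)) j) * Q (v(j:=u)) j) \<partial>\<Omega>) = (\<integral>\<^sup>+v. ennreal (w u) * ennreal (Q (v(j:=u)) j) \<partial>\<Omega>)"
      using w(2) u by (intro nn_integral_cong) (simp add: ennreal_mult')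
    also have "\<dots> = ennreal (w u) * (\<integral>\<^sup>+v. ennreal (Q (v(j:=u)) j) \<partial>\<Omega>)"
      by (rule nn_integral_cmult) (use upd_comp_meas[OF Qm j u] in measurable)
    also have "(\<integral>\<^sup>+v. ennreal (Q (v(j:=u)) j) \<partial>\<Omega>) = ennreal (\<integral>v. Q (v(j:=u)) j \<partial>\<Omega>)"
      by (rule nn_integral_eq_integral[OF intg]) (use nn in auto)
    also have "(\<integral>v. Q (v(j:=u)) j \<partial>\<Omega>) = interim_pay \<Omega> A j u" using ie by (simp add: interim_def)
    finally show "(\<integral>\<^sup>+v. ennreal (w ((v(j:=u)) j) * Q (v(j:=u)) j) \<partial>\<Omega>) = ennreal (w u) * ennreal (interim_pay \<Omega> A j u)" .
  qed
  finally show ?thesis .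
qed

end


locale auc2 = auc n f vb for n f vb +
  fixes k :: nat and A P Pstar :: "(nat \<Rightarrow> real) \<Rightarrow> nat \<Rightarrow> real" and \<pi> :: "nat \<Rightarrow> real \<Rightarrow> real"
  assumes alloc: "allocation_rule n k (profile_dist n f vb) A"
    and pimeas: "\<forall>i<n. \<pi> i \<in> borel_measurable (bidder_dist f vb i)"
    and pinn: "\<forall>i<n. \<forall>x\<in>{0..vb i}. 0 \<le> \<pi> i x"
    and hp: "highest_pi_payment n (profile_dist n f vb) \<pi> Pstar"
    and reS: "revenue_equiv n vb (profile_dist n f vb) A Pstar"
    and impl: "implements n vb (profile_dist n f vb) P A"
begin

lemma wt_real:
  assumes Q: "payment_rule n \<Omega> Q" "revenue_equiv n vb \<Omega> A Q" and j: "j < n"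
    and w: "w \<in> borel_measurable (\<mu> j)" "\<forall>u\<in>{0..vb j}. 0 \<le> w u \<and> w u \<le> B"
  shows "integrable \<Omega> (\<lambda>v. w (v j) * Q v j)"
    and "(\<integral>v. w (v j) * Q v j \<partial>\<Omega>) = enn2real (\<integral>\<^sup>+u. ennreal (w u) * ennreal (interim_pay \<Omega> A j u) \<partial>\<mu> j)"
proof -
  interpret mj: prob_space "\<mu> j" by (rule prob_mu[OF j])
  have Qm: "(\<lambda>v. Q v j) \<in> borel_measurable \<Omega>" using Q j by (auto simp: payment_rule_def)
  have wm: "(\<lambda>v. w (v j)) \<in> borel_measurable \<Omega>"
    using measurable_comp[OF comp_meas[OF j] w(1)] by (simp add: comp_def)
  have nn: "\<forall>v\<in>space \<Omega>. 0 \<le> w (v j) * Q v j"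
    using Q(1) j w(2) comp_space by (auto simp: payment_rule_def)
  have eq: "(\<integral>\<^sup>+v. ennreal (w (v j) * Q v j) \<partial>\<Omega>) = (\<integral>\<^sup>+u. ennreal (w u) * ennreal (interim_pay \<Omega> A j u) \<partial>\<mu> j)"
    by (rule wt[OF Q j w(1)]) (use w(2) in auto)
  have "(\<integral>\<^sup>+u. ennreal (w u) * ennreal (interim_pay \<Omega> A j u) \<partial>\<mu> j) \<le> (\<integral>\<^sup>+u. ennreal B * ennreal (vb j) \<partial>\<mu> j)"
  proof (rule nn_integral_mono)
    fix u assume "u \<in> space (\<mu> j)"
    then have u: "u \<in> {0..vb j}" by simp
    show "ennreal (w u) * ennreal (interim_pay \<Omega> A j u) \<le> ennreal B * ennreal (vb j)"
      using w(2) u ip_le[OF alloc j u] by (intro mult_mono ennreal_leI) auto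
  qed
  also have "\<dots> = ennreal B * ennreal (vb j)"
    using mj.emeasure_space_1 by (simp del: space_mu add: nn_integral_const)
  also have "\<dots> < \<infinity>" by (simp add: ennreal_mult_less_top)
  finally have fin: "(\<integral>\<^sup>+v. ennreal (w (v j) * Q v j) \<partial>\<Omega>) < \<infinity>" using eq by simp
  show "integrable \<Omega> (\<lambda>v. w (v j) * Q v j)"
    by (rule integrableI_nonneg) (use Qm wm nn fin in \<open>auto intro!: AE_I2\<close>)
  show "(\<integral>v. w (v j) * Q v j \<partial>\<Omega>) = enn2real (\<integral>\<^sup>+u. ennreal (w u) * ennreal (interim_pay \<Omega> A j u) \<partial>\<mu> j)"
    by (subst integral_eq_nn_integral) (use Qm wm nn eq in \<open>auto intro!: AE_I2\<close>)
qed

lemma payP: "payment_rule n \<Omega> P" and reP: "revenue_equiv n vb \<Omega> A P"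
  using impl by (auto simp: implements_def profile_dist_def)
lemma payS: "payment_rule n \<Omega> Pstar" using hp by (simp add: highest_pi_payment_def)

lemma wt_same:
  assumes j: "j < n" and w: "w \<in> borel_measurable (\<mu> j)" "\<forall>u\<in>{0..vb j}. 0 \<le> w u \<and> w u \<le> B"
  shows "integrable \<Omega> (\<lambda>v. w (v j) * P v j)" "integrable \<Omega> (\<lambda>v. w (v j) * Pstar v j)"
    "(\<integral>v. w (v j) * P v j \<partial>\<Omega>) = (\<integral>v. w (v j) * Pstar v j \<partial>\<Omega>)"
  using wt_real[OF payP reP j w] wt_real[OF payS reS j w] by auto

abbreviation "Mx v \<equiv> (\<Sum>i<n. Pstar v i)"
abbreviation "Sm v \<equiv> (\<Sum>i<n. P v i)"

lemma win:
  assumes v: "v \<in> space \<Omega>"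
  shows "\<exists>w<n. Mx v = \<pi> w (v w) \<and> (\<forall>j<n. \<pi> j (v j) \<le> Mx v) \<and> (\<forall>j<n. Pstar v j = (if j = w then Mx v else 0))"
proof -
  obtain w where w: "w < n" "\<forall>j<n. \<pi> j (v j) \<le> \<pi> w (v w)" "Pstar v w = \<pi> w (v w)"
     "\<forall>j<n. j \<noteq> w \<longrightarrow> Pstar v j = 0"
    using hp v unfolding highest_pi_payment_def by blast
  have "Mx v = (\<Sum>i<n. if i = w then \<pi> w (v w) else 0)"
    using w by (intro sum.cong) auto
  also have "\<dots> = \<pi> w (v w)" using w(1) by simp
  finally show ?thesis using w by (intro exI[of _ w]) auto
qed

lemma Mx_nn: "v \<in> space \<Omega> \<Longrightarrow> 0 \<le> Mx v"
  using payS by (auto simp: payment_rule_def intro!: sum_nonneg)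
lemma Sm_nn: "v \<in> space \<Omega> \<Longrightarrow> 0 \<le> Sm v"
  using payP by (auto simp: payment_rule_def intro!: sum_nonneg)

lemma Mx_meas: "Mx \<in> borel_measurable \<Omega>"
  using payS by (auto simp: payment_rule_def intro!: borel_measurable_sum)
lemma Sm_meas: "Sm \<in> borel_measurable \<Omega>"
  using payP by (auto simp: payment_rule_def intro!: borel_measurable_sum)

lemma one_facts:
  shows "integrable \<Omega> Mx" "integrable \<Omega> Sm" "(\<integral>v. Mx v \<partial>\<Omega>) = (\<integral>v. Sm v \<partial>\<Omega>)"
proof -
  have one: "(\<lambda>_. 1::real) \<in> borel_measurable (\<mu> j)" "\<forall>u\<in>{0..vb j}. 0 \<le> (1::real) \<and> (1::real) \<le> 1" for j
    by auto
  note W = wt_same[OF _ one]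
  have iP: "integrable \<Omega> (\<lambda>v. P v j)" and iS: "integrable \<Omega> (\<lambda>v. Pstar v j)"
    and eq: "(\<integral>v. P v j \<partial>\<Omega>) = (\<integral>v. Pstar v j \<partial>\<Omega>)" if "j < n" for j
    using W[OF that] by auto
  show "integrable \<Omega> Mx" "integrable \<Omega> Sm" using iP iS by auto
  show "(\<integral>v. Mx v \<partial>\<Omega>) = (\<integral>v. Sm v \<partial>\<Omega>)"
    using iP iS eq by (simp add: integral_sum)
qed


lemma psi_ineq:
  fixes \<psi> :: "real \<Rightarrow> real"
  assumes \<psi>m: "\<psi> \<in> borel_measurable borel" and mono: "mono \<psi>" and b: "\<forall>x. 0 \<le> \<psi> x \<and> \<psi> x \<le> B"
  shows "integrable \<Omega> (\<lambda>v. \<psi> (Mx v) * Mx v)" "integrable \<Omega> (\<lambda>v. \<psi> (Mx v) * Sm v)"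
    "(\<integral>v. \<psi> (Mx v) * Mx v \<partial>\<Omega>) \<le> (\<integral>v. \<psi> (Mx v) * Sm v \<partial>\<Omega>)"
proof -
  have B0: "0 \<le> B" using b by (meson order_trans)
  have one: "(\<lambda>_. 1::real) \<in> borel_measurable (\<mu> j)" "\<forall>u\<in>{0..vb j}. 0 \<le> (1::real) \<and> (1::real) \<le> 1" for j
    by auto
  have iP: "integrable \<Omega> (\<lambda>v. P v j)" and iS: "integrable \<Omega> (\<lambda>v. Pstar v j)" if "j < n" for j
    using wt_same[OF that one] by auto
  have psiM: "(\<lambda>v. \<psi> (Mx v)) \<in> borel_measurable \<Omega>"
    using measurable_comp[OF Mx_meas \<psi>m] by (simp add: comp_def)
  have intg: "integrable \<Omega> (\<lambda>v. \<psi> (Mx v) * Q v j)"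
    if j: "j < n" and Q: "payment_rule n \<Omega> Q" and iQ: "integrable \<Omega> (\<lambda>v. Q v j)" for Q j
  proof (rule Bochner_Integration.integrable_bound)
    show "integrable \<Omega> (\<lambda>v. B * Q v j)" using iQ by simp
    have "(\<lambda>v. Q v j) \<in> borel_measurable \<Omega>" using Q j by (auto simp: payment_rule_def)
    then show "(\<lambda>v. \<psi> (Mx v) * Q v j) \<in> borel_measurable \<Omega>" using psiM by measurable
    show "AE v in \<Omega>. norm (\<psi> (Mx v) * Q v j) \<le> norm (B * Q v j)"
    proof (rule AE_I2)
      fix v assume v: "v \<in> space \<Omega>"
      then have q: "0 \<le> Q v j" using Q j by (auto simp: payment_rule_def)
      have "\<psi> (Mx v) * Q v j \<le> B * Q v j" using b q by (intro mult_right_mono) auto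
      then show "norm (\<psi> (Mx v) * Q v j) \<le> norm (B * Q v j)" using b q B0 by simp
    qed
  qed
  have iPs: "integrable \<Omega> (\<lambda>v. \<psi> (Mx v) * P v j)" if "j < n" for j
    using intg[OF that payP iP[OF that]] .
  have iSs: "integrable \<Omega> (\<lambda>v. \<psi> (Mx v) * Pstar v j)" if "j < n" for j
    using intg[OF that payS iS[OF that]] .
  have e1: "(\<lambda>v. \<psi> (Mx v) * Mx v) = (\<lambda>v. \<Sum>j<n. \<psi> (Mx v) * Pstar v j)"
    by (simp add: sum_distrib_left)
  have e2: "(\<lambda>v. \<psi> (Mx v) * Sm v) = (\<lambda>v. \<Sum>j<n. \<psi> (Mx v) * P v j)"
    by (simp add: sum_distrib_left)
  show "integrable \<Omega> (\<lambda>v. \<psi> (Mx v) * Mx v)" unfolding e1 using iSs by auto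
  show "integrable \<Omega> (\<lambda>v. \<psi> (Mx v) * Sm v)" unfolding e2 using iPs by auto
  have step: "(\<integral>v. \<psi> (Mx v) * Pstar v j \<partial>\<Omega>) \<le> (\<integral>v. \<psi> (Mx v) * P v j \<partial>\<Omega>)" if j: "j < n" for j
  proof -
    define w where "w u = \<psi> (\<pi> j u)" for u
    have "\<pi> j \<in> borel_measurable (\<mu> j)" using pimeas j by auto
    then have wm: "w \<in> borel_measurable (\<mu> j)"
      using measurable_comp[of "\<pi> j" "\<mu> j" borel \<psi>] \<psi>m unfolding w_def comp_def by blast
    have wb: "\<forall>u\<in>{0..vb j}. 0 \<le> w u \<and> w u \<le> B" using b by (auto simp: w_def)
    note W = wt_same[OF j wm wb]
    have "(\<integral>v. \<psi> (Mx v) * Pstar v j \<partial>\<Omega>) = (\<integral>v. w (v j) * Pstar v j \<partial>\<Omega>)"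
    proof (rule Bochner_Integration.integral_cong[OF refl])
      fix v assume v: "v \<in> space \<Omega>"
      obtain i where i: "i < n" "Mx v = \<pi> i (v i)" "\<forall>j<n. Pstar v j = (if j = i then Mx v else 0)"
        using win[OF v] by blast
      have pj: "Pstar v j = (if j = i then Mx v else 0)" using i(3) j by blast
      show "\<psi> (Mx v) * Pstar v j = w (v j) * Pstar v j"
      proof (cases "j = i")
        case True
        then have "w (v j) = \<psi> (Mx v)" using i(2) by (simp add: w_def)
        then show ?thesis by simp
      next
        case False
        then have "Pstar v j = 0" using pj by simp
        then show ?thesis by simp
      qed
    qed
    also have "\<dots> = (\<integral>v. w (v j) * P v j \<partial>\<Omega>)" using W(3) by simp
    also have "\<dots> \<le> (\<integral>v. \<psi> (Mx v) * P v j \<partial>\<Omega>)"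
    proof (rule integral_mono[OF W(1) iPs[OF j]])
      fix v assume v: "v \<in> space \<Omega>"
      obtain i where i: "i < n" "\<forall>j<n. \<pi> j (v j) \<le> Mx v"
        using win[OF v] by blast
      have q: "0 \<le> P v j" using payP j v by (auto simp: payment_rule_def)
      have "w (v j) \<le> \<psi> (Mx v)" unfolding w_def using mono i j by (auto simp: mono_def)
      then show "w (v j) * P v j \<le> \<psi> (Mx v) * P v j" using q by (intro mult_right_mono) auto
    qed
    finally show ?thesis .
  qed
  have "(\<integral>v. \<psi> (Mx v) * Mx v \<partial>\<Omega>) = (\<Sum>j<n. (\<integral>v. \<psi> (Mx v) * Pstar v j \<partial>\<Omega>))"
    unfolding e1 using iSs by (simp add: integral_sum)
  also have "\<dots> \<le> (\<Sum>j<n. (\<integral>v. \<psi> (Mx v) * P v j \<partial>\<Omega>))"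
    using step by (intro sum_mono) auto
  also have "\<dots> = (\<integral>v. \<psi> (Mx v) * Sm v \<partial>\<Omega>)"
    unfolding e2 using iPs by (simp add: integral_sum)
  finally show "(\<integral>v. \<psi> (Mx v) * Mx v \<partial>\<Omega>) \<le> (\<integral>v. \<psi> (Mx v) * Sm v \<partial>\<Omega>)" .
qed


lemma final:
  fixes g :: "real \<Rightarrow> real"
  assumes g: "convex_on UNIV g" and ig1: "integrable \<Omega> (\<lambda>v. g (Mx v))" and ig2: "integrable \<Omega> (\<lambda>v. g (Sm v))"
  shows "(\<integral>v. g (Mx v) \<partial>\<Omega>) \<le> (\<integral>v. g (Sm v) \<partial>\<Omega>)"
proof -
  interpret PO: prob_space \<Omega> by (rule prob_Omega)
  have gm[measurable]: "g \<in> borel_measurable borel"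
    by (rule borel_measurable_continuous_onI[OF convex_on_continuous[OF open_UNIV g]])
  define r0 where "r0 = rd g 0"
  note iM = one_facts(1) and iS = one_facts(2) and eqM = one_facts(3)
  have gcm: "(\<lambda>x. gc g c x) \<in> borel_measurable borel" for c
    unfolding gc_def by measurable
  have gcX: "(\<lambda>v. gc g c (X v)) \<in> borel_measurable \<Omega>" if "X \<in> borel_measurable \<Omega>" for X c
    using measurable_comp[OF that gcm[of c]] by (simp add: comp_def)
  have gcint: "integrable \<Omega> (\<lambda>v. gc g c (X v))"
    if X: "X \<in> borel_measurable \<Omega>" "integrable \<Omega> X" "\<forall>v\<in>space \<Omega>. 0 \<le> X v" and c: "0 \<le> c" for X c
  proof (rule Bochner_Integration.integrable_bound)
    show "integrable \<Omega> (\<lambda>v. \<bar>g 0\<bar> + (\<bar>r0\<bar> + \<bar>rd g c\<bar>) * X v)"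
      using X(2) PO.integrable_const by (intro Bochner_Integration.integrable_add integrable_mult_right) auto
    show "(\<lambda>v. gc g c (X v)) \<in> borel_measurable \<Omega>" by (rule gcX[OF X(1)])
    show "AE v in \<Omega>. norm (gc g c (X v)) \<le> norm (\<bar>g 0\<bar> + (\<bar>r0\<bar> + \<bar>rd g c\<bar>) * X v)"
    proof (rule AE_I2)
      fix v assume v: "v \<in> space \<Omega>"
      have x0: "0 \<le> X v" using X(3) v by auto
      have l: "g 0 + r0 * X v \<le> gc g c (X v)" using gc_lower[OF g c] by (simp add: r0_def)
      have u: "gc g c (X v) \<le> g 0 + rd g c * X v" using gc_upper[OF g c x0] .
      have "\<bar>r0 * X v\<bar> \<le> \<bar>r0\<bar> * X v" "\<bar>rd g c * X v\<bar> \<le> \<bar>rd g c\<bar> * X v" using x0 by (auto simp: abs_mult)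
      then have "\<bar>gc g c (X v)\<bar> \<le> \<bar>g 0\<bar> + (\<bar>r0\<bar> + \<bar>rd g c\<bar>) * X v"
        using l u x0 by (auto simp: algebra_simps abs_le_iff)
      then show "norm (gc g c (X v)) \<le> norm (\<bar>g 0\<bar> + (\<bar>r0\<bar> + \<bar>rd g c\<bar>) * X v)"
        using x0 by simp
    qed
  qed
  have Mnn: "\<forall>v\<in>space \<Omega>. 0 \<le> Mx v" using Mx_nn by auto
  have Snn: "\<forall>v\<in>space \<Omega>. 0 \<le> Sm v" using Sm_nn by auto
  have stepN: "(\<integral>v. gc g (real N) (Mx v) \<partial>\<Omega>) \<le> (\<integral>v. g (Sm v) \<partial>\<Omega>)" for N :: nat
  proof -
    define c where "c = real N"
    have c0: "0 \<le> c" by (simp add: c_def)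
    define \<psi> where "\<psi> x = rd g (max 0 (min x c)) - r0" for x
    have \<psi>mono: "mono \<psi>" unfolding mono_def \<psi>_def
      by (auto intro!: rd_mono[OF g])
    have \<psi>b: "\<forall>x. 0 \<le> \<psi> x \<and> \<psi> x \<le> rd g c - r0"
      unfolding \<psi>_def r0_def using c0 by (auto intro!: rd_mono[OF g])
    have \<psi>m: "\<psi> \<in> borel_measurable borel" by (rule borel_measurable_mono[OF \<psi>mono])
    note PI = psi_ineq[OF \<psi>m \<psi>mono \<psi>b]
    have igS: "integrable \<Omega> (\<lambda>v. gc g c (Sm v))" by (rule gcint[OF Sm_meas iS Snn c0])
    have igM: "integrable \<Omega> (\<lambda>v. gc g c (Mx v))" by (rule gcint[OF Mx_meas iM Mnn c0])
    have "(\<integral>v. gc g c (Mx v) + (\<psi> (Mx v) * Sm v - \<psi> (Mx v) * Mx v) + r0 * (Sm v - Mx v) \<partial>\<Omega>)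
        \<le> (\<integral>v. gc g c (Sm v) \<partial>\<Omega>)"
    proof (rule integral_mono)
      show "integrable \<Omega> (\<lambda>v. gc g c (Mx v) + (\<psi> (Mx v) * Sm v - \<psi> (Mx v) * Mx v) + r0 * (Sm v - Mx v))"
        using igM PI(1,2) iM iS by auto
      show "integrable \<Omega> (\<lambda>v. gc g c (Sm v))" by (rule igS)
      fix v assume v: "v \<in> space \<Omega>"
      have m0: "0 \<le> Mx v" using Mnn v by auto
      have "gc g c (Sm v) \<ge> gc g c (Mx v) + rd g (min (Mx v) c) * (Sm v - Mx v)" by (rule gc_sub[OF g])
      moreover have "rd g (min (Mx v) c) = \<psi> (Mx v) + r0" using m0 c0 by (simp add: \<psi>_def)
      ultimately show "gc g c (Mx v) + (\<psi> (Mx v) * Sm v - \<psi> (Mx v) * Mx v) + r0 * (Sm v - Mx v) \<le> gc g c (Sm v)"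
        by (simp add: algebra_simps)
    qed
    moreover have "(\<integral>v. gc g c (Mx v) + (\<psi> (Mx v) * Sm v - \<psi> (Mx v) * Mx v) + r0 * (Sm v - Mx v) \<partial>\<Omega>)
        = (\<integral>v. gc g c (Mx v) \<partial>\<Omega>) + ((\<integral>v. \<psi> (Mx v) * Sm v \<partial>\<Omega>) - (\<integral>v. \<psi> (Mx v) * Mx v \<partial>\<Omega>))
          + r0 * ((\<integral>v. Sm v \<partial>\<Omega>) - (\<integral>v. Mx v \<partial>\<Omega>))"
      using igM PI(1,2) iM iS by (simp add: integral_add integral_diff)
    ultimately have "(\<integral>v. gc g c (Mx v) \<partial>\<Omega>) \<le> (\<integral>v. gc g c (Sm v) \<partial>\<Omega>)"
      using PI(3) eqM by simp
    also have "\<dots> \<le> (\<integral>v. g (Sm v) \<partial>\<Omega>)"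
      by (rule integral_mono[OF igS ig2]) (rule gc_le[OF g])
    finally show ?thesis by (simp add: c_def)
  qed
  have lim: "(\<lambda>N. (\<integral>v. gc g (real N) (Mx v) \<partial>\<Omega>)) \<longlonglongrightarrow> (\<integral>v. g (Mx v) \<partial>\<Omega>)"
  proof (rule integral_dominated_convergence[where w="\<lambda>v. \<bar>g (Mx v)\<bar> + \<bar>g 0\<bar> + \<bar>r0\<bar> * Mx v"])
    show "(\<lambda>v. g (Mx v)) \<in> borel_measurable \<Omega>" using Mx_meas by measurable
    show "(\<lambda>v. gc g (real N) (Mx v)) \<in> borel_measurable \<Omega>" for N by (rule gcX[OF Mx_meas])
    show "integrable \<Omega> (\<lambda>v. \<bar>g (Mx v)\<bar> + \<bar>g 0\<bar> + \<bar>r0\<bar> * Mx v)"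
      using ig1 iM PO.integrable_const by (intro Bochner_Integration.integrable_add integrable_mult_right) auto
    show "AE v in \<Omega>. (\<lambda>N. gc g (real N) (Mx v)) \<longlonglongrightarrow> g (Mx v)"
    proof (rule AE_I2)
      fix v
      obtain N0 :: nat where "Mx v \<le> real N0" using real_arch_simple by blast
      then have "\<forall>N\<ge>N0. gc g (real N) (Mx v) = g (Mx v)"
        by (auto simp: gc_def)
      then show "(\<lambda>N. gc g (real N) (Mx v)) \<longlonglongrightarrow> g (Mx v)"
        by (intro tendsto_eventually) (auto simp: eventually_sequentially)
    qed
    show "AE v in \<Omega>. norm (gc g (real N) (Mx v)) \<le> \<bar>g (Mx v)\<bar> + \<bar>g 0\<bar> + \<bar>r0\<bar> * Mx v" for N
    proof (rule AE_I2)
      fix v assume v: "v \<in> space \<Omega>"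
      have x0: "0 \<le> Mx v" using Mnn v by auto
      have l: "g 0 + r0 * Mx v \<le> gc g (real N) (Mx v)" using gc_lower[OF g, of "real N"] by (simp add: r0_def)
      have u: "gc g (real N) (Mx v) \<le> g (Mx v)" by (rule gc_le[OF g])
      have "\<bar>r0 * Mx v\<bar> \<le> \<bar>r0\<bar> * Mx v" using x0 by (auto simp: abs_mult)
      then show "norm (gc g (real N) (Mx v)) \<le> \<bar>g (Mx v)\<bar> + \<bar>g 0\<bar> + \<bar>r0\<bar> * Mx v"
        using l u by (auto simp: abs_le_iff)
    qed
  qed
  show ?thesis by (rule LIMSEQ_le_const2[OF lim]) (use stepN in auto)
qed

end

theorem mainTheorem9:
  fixes n k :: nat and f :: "nat \<Rightarrow> real \<Rightarrow> real" and vb :: "nat \<Rightarrow> real"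
    and A Pstar P :: "(nat \<Rightarrow> real) \<Rightarrow> nat \<Rightarrow> real"
    and \<pi> :: "nat \<Rightarrow> real \<Rightarrow> real" and g :: "real \<Rightarrow> real"
  defines "\<Omega> \<equiv> profile_dist n f vb"
  assumes "1 \<le> k" and "k < n"
    and "\<forall>i<n. 0 < vb i"
    and "\<forall>i<n. f i \<in> borel_measurable lborel"
    and "\<forall>i<n. \<forall>x\<in>{0..vb i}. 0 < f i x"
    and "\<forall>i<n. (\<integral>\<^sup>+x\<in>{0..vb i}. ennreal (f i x) \<partial>lborel) = 1"
    and "allocation_rule n k \<Omega> A"
    and "implementable n vb \<Omega> A"
    and "\<forall>i<n. \<pi> i \<in> borel_measurable (bidder_dist f vb i)"
    and "\<forall>i<n. \<forall>x\<in>{0..vb i}. 0 \<le> \<pi> i x"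
    and "highest_pi_payment n \<Omega> \<pi> Pstar"
    and "revenue_equiv n vb \<Omega> A Pstar"
    and "convex_on UNIV g"
    and "implements n vb \<Omega> P A"
    and "integrable \<Omega> (\<lambda>v. g (\<Sum>i<n. Pstar v i))"
    and "integrable \<Omega> (\<lambda>v. g (\<Sum>i<n. P v i))"
  shows "(\<integral>v. g (\<Sum>i<n. Pstar v i) \<partial>\<Omega>) \<le> (\<integral>v. g (\<Sum>i<n. P v i) \<partial>\<Omega>)"
proof -
  interpret auc2 n f vb k A P Pstar \<pi>
    using assms unfolding \<Omega>_def by unfold_locales auto
  show ?thesis
    using final[of g] assms(14,16,17) unfolding \<Omega>_def by blast
qed

end
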